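(* Assume $2c<\gamma<a-c$ and additionally $\gamma>\frac a2+c$. Then the unique maximizer $p^*_\gamma$ of $r_\gamma$ on $[0,a/b]$ (the unique zero of $r_\gamma'$ in $(0,a/b)$) equals $\frac{a}{2b}$. Moreover, let $\alpha,\beta\ge0$ and let $\hat a,\hat b$ be real numbers with $\hat b\ge b_{\min}$, $|\hat a-a|\le\alpha$, $|\hat b-b|\le\beta$ and $\frac{\hat a}{2\hat b}\in[0,a/b]$. Then $$r_\gamma\Bigl(\frac a{2b}\Bigr)-r_\gamma\Bigl(\frac{\hat a}{2\hat b}\Bigr)\le 2C_s\Bigl(\frac{a_{\max}^2\beta^2}{4b_{\min}^4}+\frac{\alpha^2}{4b_{\min}^2}\Bigr),$$ where $C_s:=\frac{2b+abL_F}{2}$.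
   Context: Let $a,b,c,L_F>0$ and constants $a_{\max},b_{\min}>0$ with $a\le a_{\max}$, $b\ge b_{\min}$. Let $N$ be a real random variable taking values in $[-c,c]$ with $\mathbb{E}[N]=0$, whose cumulative distribution function $F$ is $L_F$-Lipschitz. For an inventory level $\gamma$ and price $p\ge0$, the expected revenue is $r_\gamma(p):=p\cdot\mathbb{E}_N\bigl[\min\{\gamma,\,a-bp+N\}\bigr]$, and $r_\gamma'$ denotes its derivative in $p$. *)

theory Defs
  imports "HOL-Probability.Probability"
begin

text \<open>The noise N is represented by its distribution M, a probability measure on the reals.
  Expected revenue r_gamma(p) = p * E[min gamma (a - b p + N)].\<close>

definition revenue :: "real measure \<Rightarrow> real \<Rightarrow> real \<Rightarrow> real \<Rightarrow> real \<Rightarrow> real" where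
  "revenue M a b \<gamma> p = p * (\<integral>n. min \<gamma> (a - b * p + n) \<partial>M)"

definition cdf_of :: "real measure \<Rightarrow> real \<Rightarrow> real" where
  "cdf_of M x = measure M {..x}"

end

theory Submission imports Defs begin

lemma pointwise:
  fixes a b g c p q n :: real
  assumes "0 \<le> p" "p \<le> q" "b > 0" "n \<le> c"
  shows "q * min g (a - b * q + n) - p * min g (a - b * p + n)
         \<ge> (q - p) * (min (a - b * (p + q)) (g - c) + n)"
proof (cases "a - b * q + n < g")
  case True
  have "p * min g (a - b * p + n) \<le> p * (a - b * p + n)"
    using assms by (intro mult_left_mono) auto
  moreover have "q * (a - b * q + n) - p * (a - b * p + n) = (q - p) * (a - b * (p + q) + n)"
    by (simp add: algebra_simps)
  moreover have "(q - p) * (min (a - b * (p + q)) (g - c) + n) \<le> (q - p) * (a - b * (p + q) + n)"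
    using assms by (intro mult_left_mono) auto
  ultimately show ?thesis using True by simp
next
  case False
  have "b * p \<le> b * q" using assms by simp
  then have "min g (a - b * p + n) = g" "min g (a - b * q + n) = g" using False by auto
  moreover have "(q - p) * (min (a - b * (p + q)) (g - c) + n) \<le> (q - p) * g"
    using assms by (intro mult_left_mono) auto
  ultimately show ?thesis by (simp add: algebra_simps)
qed

locale noise = prob_space M for M :: "real measure" +
  fixes c L :: real
  assumes sets_M: "sets M = sets borel" and supp: "AE n in M. n \<in> {-c..c}"
    and int_id: "integrable M (\<lambda>n. n)" and mean: "(\<integral>n. n \<partial>M) = 0"
    and lip: "\<forall>x y. \<bar>cdf_of M x - cdf_of M y\<bar> \<le> L * \<bar>x - y\<bar>"
begin

lemma space_M: "space M = UNIV"
  using sets_eq_imp_space_eq[OF sets_M] by simp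

lemma meas: "f \<in> borel_measurable borel \<Longrightarrow> f \<in> borel_measurable M"
  using measurable_cong_sets[OF sets_M refl, of borel] by blast

lemma sets_in: "A \<in> sets borel \<Longrightarrow> A \<in> sets M"
  using sets_M by simp

lemma int_bdd:
  fixes f :: "real \<Rightarrow> real"
  assumes "f \<in> borel_measurable borel" "\<And>n. n \<in> {-c..c} \<Longrightarrow> \<bar>f n\<bar> \<le> B"
  shows "integrable M f"
proof -
  have i: "integrable M (\<lambda>_. B)" by simp
  have m:  "f \<in> borel_measurable M" using meas assms(1) .
  have b: "norm (f x) \<le> norm B" if "x \<in> {-c..c}" for x
  proof -
    have "\<bar>f x\<bar> \<le> B" using assms(2) that by blast
    moreover have "B \<le> abs B" by (rule abs_ge_self)
    ultimately show ?thesis by simp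
  qed
  have "AE x in M. norm (f x) \<le> norm B"
    using supp by eventually_elim (rule b)
  then show ?thesis using Bochner_Integration.integrable_bound[OF i m] by blast
qed

lemma fin: "emeasure M A < top"
  using emeasure_finite[of A] top.not_eq_extremum by blast

definition phi :: "real \<Rightarrow> real" where
  "phi t = (\<integral>n. max 0 (n - t) \<partial>M)"

lemma int_phi: "integrable M (\<lambda>n. max 0 (n - t))"
  by (rule int_bdd[where B="\<bar>c\<bar> + \<bar>t\<bar>"]) auto

lemma int_min: "integrable M (\<lambda>n. min g (s + n))"
  by (rule int_bdd[where B="\<bar>c\<bar> + \<bar>s\<bar> + \<bar>g\<bar>"]) auto

lemma phi_nonneg: "phi t \<ge> 0"
  unfolding phi_def by (rule integral_nonneg_AE) auto

lemma phi_zero: assumes "t \<ge> c" shows "phi t = 0"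
proof -
  have "phi t = (\<integral>n. 0 \<partial>M)" unfolding phi_def
  proof (rule integral_cong_AE)
    show "AE n in M. max 0 (n - t) = 0"
      using supp by eventually_elim (use assms in auto)
  qed (auto intro: meas)
  then show ?thesis by simp
qed

lemma G_eq: "(\<integral>n. min g (s + n) \<partial>M) = s - phi (g - s)"
proof -
  have "(\<integral>n. min g (s + n) \<partial>M) = (\<integral>n. (s + n) - max 0 (n - (g - s)) \<partial>M)"
    by (rule Bochner_Integration.integral_cong) auto
  also have "\<dots> = (\<integral>n. s + n \<partial>M) - phi (g - s)"
    unfolding phi_def
    by (rule Bochner_Integration.integral_diff) (use int_id int_phi in auto)
  also have "(\<integral>n. s + n \<partial>M) = s"
    using int_id mean by (simp add: prob_space)
  finally show ?thesis .
qed

lemma cdf_c: "cdf_of M c = 1"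
proof -
  have "prob {..c} = 1"
  proof (subst prob_eq_1)
    show "AE x in M. x \<in> {..c}" using supp by eventually_elim auto
  qed (auto intro: sets_in)
  then show ?thesis by (simp add: cdf_of_def)
qed

lemma tail: "prob {t<..} = 1 - cdf_of M t"
proof -
  have "{t<..} = space M - {..t}" using space_M by auto
  then show ?thesis using prob_compl[of "{..t}"] sets_in by (simp add: cdf_of_def)
qed

lemma phi_step: assumes "h \<ge> 0" shows "phi t - phi (t + h) \<le> h * (1 - cdf_of M t)"
proof -
  have "phi t - phi (t + h) = (\<integral>n. max 0 (n - t) - max 0 (n - (t + h)) \<partial>M)"
    unfolding phi_def by (rule Bochner_Integration.integral_diff[symmetric]) (use int_phi in auto)
  also have "\<dots> \<le> (\<integral>n. h * indicator {t<..} n \<partial>M)"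
  proof (rule integral_mono)
    show "integrable M (\<lambda>n. max 0 (n - t) - max 0 (n - (t + h)))" using int_phi by auto
    show "integrable M (\<lambda>n. h * indicator {t<..} n)"
      using sets_in fin by (intro integrable_mult_right integrable_real_indicator) auto
    fix n show "max 0 (n - t) - max 0 (n - (t + h)) \<le> h * indicator {t<..} n"
      using assms by (auto simp: indicator_def)
  qed
  also have "\<dots> = h * (\<integral>n. indicator {t<..} n \<partial>M)" by (rule integral_mult_right_zero)
  also have "\<dots> = h * prob {t<..}"
    by (simp add: space_M fin)
  finally show ?thesis using tail by simp
qed

lemma tail_bound: assumes "t \<le> c" shows "1 - cdf_of M t \<le> L * (c - t)"
  using lip[rule_format, of c t] cdf_c assms by simp

lemma sum_nat_real: "(\<Sum>k<m. real k) = real m * (real m - 1) / 2"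
  by (induction m) (auto simp: field_simps)

lemma grid:
  assumes m: "m > 0" and t: "t \<le> c"
  shows "phi t \<le> L * (c - t)^2 * (real m + 1) / (2 * real m)"
proof -
  define h where "h = (c - t) / real m"
  have h0: "h \<ge> 0" using t m by (simp add: h_def)
  have hm: "h * real m = c - t" using m by (simp add: h_def)
  define f where "f k = phi (t + real k * h)" for k
  have "(\<Sum>k<m. f k - f (Suc k)) = f 0 - f m" by (rule sum_lessThan_telescope')
  moreover have "f 0 = phi t" by (simp add: f_def)
  moreover have "f m = 0" unfolding f_def using hm by (intro phi_zero) (simp add: mult.commute)
  ultimately have eq: "phi t = (\<Sum>k<m. f k - f (Suc k))" by simp
  have step: "f k - f (Suc k) \<le> h * (L * (c - t - real k * h))" if "k < m" for k
  proof -
    have "f k - f (Suc k) = phi (t + real k * h) - phi ((t + real k * h) + h)"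
      by (simp add: f_def algebra_simps)
    also have "\<dots> \<le> h * (1 - cdf_of M (t + real k * h))" by (rule phi_step[OF h0])
    also have "\<dots> \<le> h * (L * (c - (t + real k * h)))"
    proof (rule mult_left_mono[OF tail_bound h0])
      have "real k * h \<le> real m * h" using that h0 by (intro mult_right_mono) auto
      then show "t + real k * h \<le> c" using hm by (simp add: mult.commute)
    qed
    finally show ?thesis by (simp add: algebra_simps)
  qed
  have "phi t \<le> (\<Sum>k<m. h * (L * (c - t - real k * h)))"
    unfolding eq by (rule sum_mono) (rule step, simp)
  also have "(\<Sum>k<m. h * (L * (c - t - real k * h))) = (\<Sum>k<m. h * L * (c - t) - (h * L * h) * real k)"
    by (rule sum.cong) (auto simp: algebra_simps)
  also have "\<dots> = real m * (h * L * (c - t)) - (h * L * h) * (\<Sum>k<m. real k)"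
    by (simp add: sum_subtractf sum_distrib_left)
  also have "\<dots> = h * L * (real m * (c - t) - h * (\<Sum>k<m. real k))"
    by (simp add: algebra_simps)
  also have "\<dots> = L * (c - t)^2 * (real m + 1) / (2 * real m)"
    unfolding sum_nat_real using m by (simp add: h_def field_simps power2_eq_square)
  finally show ?thesis .
qed

lemma phi_bound:
  assumes t: "t \<le> c" and L: "L \<ge> 0"
  shows "phi t \<le> L * (c - t)^2 / 2"
proof (rule ccontr)
  define A where "A = L * (c - t)^2 / 2"
  assume "\<not> ?thesis"
  then have gt: "phi t > A" by (simp add: A_def)
  have A0: "A \<ge> 0" using L by (simp add: A_def)
  obtain m :: nat where m: "real m > A / (phi t - A)" using reals_Archimedean2 by blast
  have mpos: "m > 0" using m A0 gt by (cases "m = 0") (auto simp: divide_simps)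
  have "phi t \<le> A * (real m + 1) / real m" using grid[OF mpos t] by (simp add: A_def)
  then have "phi t * real m \<le> A * (real m + 1)" using mpos by (simp add: field_simps)
  moreover have "A < (phi t - A) * real m" using m gt by (simp add: field_simps)
  ultimately show False by (simp add: algebra_simps)
qed

lemma rev_eq: "revenue M a b g p = p * ((a - b * p) - phi (g - (a - b * p)))"
  unfolding revenue_def using G_eq[of g "a - b * p"] by simp

lemma slope:
  assumes "0 \<le> p" "p \<le> q" "b > 0"
  shows "revenue M a b g q - revenue M a b g p \<ge> (q - p) * min (a - b * (p + q)) (g - c)"
proof -
  let ?K = "min (a - b * (p + q)) (g - c)"
  have "revenue M a b g q - revenue M a b g p
     = (\<integral>n. q * min g (a - b * q + n) - p * min g (a - b * p + n) \<partial>M)"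
    unfolding revenue_def
    by (subst Bochner_Integration.integral_diff) (use int_min in auto)
  also have "\<dots> \<ge> (\<integral>n. (q - p) * (?K + n) \<partial>M)"
  proof (rule integral_mono_AE)
    show "integrable M (\<lambda>n. (q - p) * (?K + n))" using int_id by auto
    show "integrable M (\<lambda>n. q * min g (a - b * q + n) - p * min g (a - b * p + n))"
      using int_min by auto
    show "AE n in M. (q - p) * (?K + n) \<le> q * min g (a - b * q + n) - p * min g (a - b * p + n)"
      using supp by eventually_elim (rule pointwise, use assms in auto)
  qed
  also have "(\<integral>n. (q - p) * (?K + n) \<partial>M) = (q - p) * ?K"
    using int_id mean by (simp add: prob_space)
  finally show ?thesis .
qed

end


lemma no_zero_deriv:
  fixes f :: "real \<Rightarrow> real"
  assumes d: "(f has_real_derivative 0) (at x)" and "\<delta> > 0" "\<kappa> > 0"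
    and sl: "\<And>q. x < q \<Longrightarrow> q < x + \<delta> \<Longrightarrow> f q - f x \<ge> \<kappa> * (q - x)"
  shows False
proof -
  have "((\<lambda>y. (f y - f x) / (y - x)) \<longlongrightarrow> 0) (at x)"
    using d by (simp add: has_field_derivative_iff)
  then have "eventually (\<lambda>y. dist ((f y - f x) / (y - x)) 0 < \<kappa>) (at x)"
    using assms(3) tendstoD by blast
  then obtain d where d0: "d > 0" and dd: "\<And>y. y \<noteq> x \<Longrightarrow> dist y x < d \<Longrightarrow> dist ((f y - f x) / (y - x)) 0 < \<kappa>"
    unfolding eventually_at by blast
  define y where "y = x + min d \<delta> / 2"
  have y1: "x < y" "y < x + \<delta>" "dist y x < d" using d0 assms(2) by (auto simp: y_def dist_real_def)
  have "\<kappa> * (y - x) \<le> f y - f x" using sl y1 by blast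
  then have "\<kappa> \<le> (f y - f x) / (y - x)" using y1 by (simp add: field_simps)
  moreover have "\<bar>(f y - f x) / (y - x)\<bar> < \<kappa>" using dd[of y] y1 by (simp only: dist_real_def diff_zero)
  moreover have "(f y - f x) / (y - x) \<le> \<bar>(f y - f x) / (y - x)\<bar>" by (rule abs_ge_self)
  ultimately show False by linarith
qed

lemma est_bound:
  fixes a b a_hat b_hat \<alpha> \<beta> a_max b_min :: real
  assumes "b_min > 0" "b \<ge> b_min" "b_hat \<ge> b_min" "0 < a" "a \<le> a_max"
    "\<bar>a_hat - a\<bar> \<le> \<alpha>" "\<bar>b_hat - b\<bar> \<le> \<beta>"
  shows "(a_hat / (2 * b_hat) - a / (2 * b))^2 \<le> 2 * (a_max\<^sup>2 * \<beta>\<^sup>2 / (4 * b_min ^ 4) + \<alpha>\<^sup>2 / (4 * b_min\<^sup>2))"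
proof -
  have b0: "b > 0" "b_hat > 0" using assms by auto
  have eq: "a_hat / (2 * b_hat) - a / (2 * b) = (a_hat - a) / (2 * b_hat) + a * (b - b_hat) / (2 * b * b_hat)"
    using b0 by (simp add: field_simps)
  have u: "\<bar>(a_hat - a) / (2 * b_hat)\<bar> \<le> \<alpha> / (2 * b_min)"
  proof -
    have "\<bar>(a_hat - a) / (2 * b_hat)\<bar> = \<bar>a_hat - a\<bar> / (2 * b_hat)" using b0 by simp
    also have "\<dots> \<le> \<alpha> / (2 * b_hat)" using assms b0 by (intro divide_right_mono) auto
    also have "\<dots> \<le> \<alpha> / (2 * b_min)" using assms b0
      by (intro divide_left_mono) (auto intro: order_trans[OF abs_ge_zero])
    finally show ?thesis .
  qed
  have v: "\<bar>a * (b - b_hat) / (2 * b * b_hat)\<bar> \<le> a_max * \<beta> / (2 * b_min^2)"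
  proof -
    have "\<bar>a * (b - b_hat) / (2 * b * b_hat)\<bar> = a * \<bar>b_hat - b\<bar> / (2 * b * b_hat)"
      using b0 assms by (simp add: abs_mult abs_minus_commute)
    also have "\<dots> \<le> a_max * \<beta> / (2 * b * b_hat)" using assms b0
      by (intro divide_right_mono mult_mono) auto
    also have "\<dots> \<le> a_max * \<beta> / (2 * b_min^2)" using assms b0
      by (intro divide_left_mono mult_nonneg_nonneg)
         (auto simp: power2_eq_square intro: mult_mono order_trans[OF abs_ge_zero])
    finally show ?thesis .
  qed
  define U where "U = \<alpha> / (2 * b_min)"
  define V where "V = a_max * \<beta> / (2 * b_min^2)"
  have "\<bar>a_hat / (2 * b_hat) - a / (2 * b)\<bar> \<le> U + V"
  proof -
    have "\<bar>(a_hat - a) / (2 * b_hat) + a * (b - b_hat) / (2 * b * b_hat)\<bar>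
      \<le> \<bar>(a_hat - a) / (2 * b_hat)\<bar> + \<bar>a * (b - b_hat) / (2 * b * b_hat)\<bar>" by (rule abs_triangle_ineq)
    then show ?thesis unfolding eq U_def V_def using u v by linarith
  qed
  then have "\<bar>a_hat / (2 * b_hat) - a / (2 * b)\<bar>^2 \<le> (U + V)^2"
    by (intro power_mono) auto
  then have "(a_hat / (2 * b_hat) - a / (2 * b))^2 \<le> (U + V)^2" by simp
  also have "\<dots> \<le> 2 * (U^2 + V^2)"
  proof -
    have e1: "2 * (U^2 + V^2) - (U+V)^2 = (U-V)^2"
      by (simp add: power2_eq_square algebra_simps)
    have "0 \<le> (U-V)^2" by simp
    then show ?thesis using e1 by linarith
  qed
  also have "U^2 + V^2 = a_max\<^sup>2 * \<beta>\<^sup>2 / (4 * b_min ^ 4) + \<alpha>\<^sup>2 / (4 * b_min\<^sup>2)"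
    by (simp add: U_def V_def power_divide power_mult_distrib field_simps)
  finally show ?thesis .
qed

theorem mainTheorem4:
  fixes M :: "real measure"
    and a b c L_F a_max b_min \<gamma> :: real
  assumes a_pos: "a > 0" and b_pos: "b > 0" and c_pos: "c > 0" and LF_pos: "L_F > 0"
    and amax_pos: "a_max > 0" and bmin_pos: "b_min > 0"
    and a_le: "a \<le> a_max" and b_ge: "b \<ge> b_min"
    and prob: "prob_space M" and sets_M: "sets M = sets borel"
    and supp: "AE n in M. n \<in> {-c..c}"
    and mean0: "integrable M (\<lambda>n. n)" "(\<integral>n. n \<partial>M) = 0"
    and lip: "\<forall>x y. \<bar>cdf_of M x - cdf_of M y\<bar> \<le> L_F * \<bar>x - y\<bar>"
    and g1: "2 * c < \<gamma>" and g2: "\<gamma> < a - c" and g3: "\<gamma> > a / 2 + c"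
  shows "a / (2 * b) \<in> {0..a / b}
    \<and> (\<forall>p \<in> {0..a / b}. revenue M a b \<gamma> p \<le> revenue M a b \<gamma> (a / (2 * b)))
    \<and> (\<forall>p \<in> {0..a / b}. revenue M a b \<gamma> p = revenue M a b \<gamma> (a / (2 * b)) \<longrightarrow> p = a / (2 * b))
    \<and> ((revenue M a b \<gamma>) has_real_derivative 0) (at (a / (2 * b)))
    \<and> (\<forall>p \<in> {0<..<a / b}. ((revenue M a b \<gamma>) has_real_derivative 0) (at p) \<longrightarrow> p = a / (2 * b))
    \<and> (\<forall>\<alpha> \<beta> a_hat b_hat :: real.
         \<alpha> \<ge> 0 \<and> \<beta> \<ge> 0 \<and> b_hat \<ge> b_min \<and> \<bar>a_hat - a\<bar> \<le> \<alpha> \<and> \<bar>b_hat - b\<bar> \<le> \<beta>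
         \<and> a_hat / (2 * b_hat) \<in> {0..a / b} \<longrightarrow>
         revenue M a b \<gamma> (a / (2 * b)) - revenue M a b \<gamma> (a_hat / (2 * b_hat))
           \<le> 2 * ((2 * b + a * b * L_F) / 2)
               * (a_max\<^sup>2 * \<beta>\<^sup>2 / (4 * b_min ^ 4) + \<alpha>\<^sup>2 / (4 * b_min\<^sup>2)))"
proof -
  interpret noise M c L_F
  proof (rule noise.intro[OF prob], rule noise_axioms.intro)
  qed (fact sets_M supp mean0 lip)+
  define ps where "ps = a / (2 * b)"
  define r where "r = revenue M a b \<gamma>"
  define S where "S = {p. b * p > a + c - \<gamma>}"
  have openS: "open S" unfolding S_def
    by (rule open_Collect_less) (auto intro!: continuous_intros)
  have exact: "r p = p * (a - b * p)" if "p \<in> S" for p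
  proof -
    have "phi (\<gamma> - (a - b * p)) = 0" using that by (intro phi_zero) (auto simp: S_def)
    then show ?thesis by (simp add: r_def rev_eq)
  qed
  have upper: "r p \<le> p * (a - b * p)" if "p \<ge> 0" for p
    using phi_nonneg[of "\<gamma> - (a - b * p)"] that
    by (simp add: r_def rev_eq algebra_simps mult_left_mono)
  have quad: "p * (a - b * p) = a^2 / (4 * b) - b * (p - ps)^2" for p
    using b_pos by (simp add: ps_def field_simps power2_eq_square)
  have psS: "ps \<in> S" using g3 b_pos by (simp add: S_def ps_def)
  have rps: "r ps = a^2 / (4 * b)" using exact[OF psS] quad[of ps] by simp
  have ps_in: "ps \<in> {0..a / b}" using a_pos b_pos by (auto simp: ps_def field_simps)
  have dpoly: "((\<lambda>p. p * (a - b * p)) has_real_derivative (a - 2 * b * p)) (at p)" for p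
    by (auto intro!: derivative_eq_intros simp: algebra_simps)
  have dS: "(r has_real_derivative (a - 2 * b * p)) (at p)" if "p \<in> S" for p
    by (rule has_field_derivative_transform_within_open[OF dpoly openS that]) (simp add: exact)
  have P2: "\<forall>p \<in> {0..a / b}. r p \<le> r ps"
  proof
    fix p :: real assume "p \<in> {0..a / b}"
    then have "r p \<le> p * (a - b * p)" using upper by auto
    also have "\<dots> \<le> r ps" using quad[of p] rps b_pos by simp
    finally show "r p \<le> r ps" .
  qed
  have P3: "\<forall>p \<in> {0..a / b}. r p = r ps \<longrightarrow> p = ps"
  proof (intro ballI impI)
    fix p :: real assume p: "p \<in> {0..a / b}" and e: "r p = r ps"
    have "r p \<le> p * (a - b * p)" using upper p by auto
    then have "b * (p - ps)^2 \<le> 0" using quad[of p] rps e by simp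
    then have "(p - ps)^2 \<le> 0" using b_pos by (simp add: mult_le_0_iff)
    then have "(p - ps)^2 = 0" by (simp add: antisym)
    then show "p = ps" by simp
  qed
  have P4: "(r has_real_derivative 0) (at ps)"
    using dS[OF psS] b_pos by (simp add: ps_def)
  have P5: "\<forall>p \<in> {0<..<a / b}. (r has_real_derivative 0) (at p) \<longrightarrow> p = ps"
  proof (intro ballI impI)
    fix p :: real assume p: "p \<in> {0<..<a / b}" and d: "(r has_real_derivative 0) (at p)"
    show "p = ps"
    proof (cases "p \<in> S")
      case True
      then have "a - 2 * b * p = 0" using DERIV_unique[OF d dS[OF True]] by simp
      then show ?thesis using b_pos by (simp add: ps_def field_simps)
    next
      case False
      then have lo: "b * p < a / 2" using g3 by (simp add: S_def)
      define \<delta> where "\<delta> = (a - 2 * b * p) / (2 * b)"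
      define \<kappa> where "\<kappa> = min ((a - 2 * b * p) / 2) (\<gamma> - c)"
      have "\<delta> > 0" using lo b_pos by (simp add: \<delta>_def)
      moreover have "\<kappa> > 0" using lo g1 c_pos by (simp add: \<kappa>_def)
      moreover have "r q - r p \<ge> \<kappa> * (q - p)" if q: "p < q" "q < p + \<delta>" for q
      proof -
        have "b * q < b * p + (a - 2 * b * p) / 2"
          using q b_pos by (simp add: \<delta>_def field_simps)
        moreover have "b * p + (a - 2 * b * p) / 2 = a / 2" by (simp add: field_simps)
        ultimately have "b * q < a / 2" by linarith
        moreover have "a - b * (p + q) - (a - 2 * b * p) / 2 = a / 2 - b * q" by (simp add: field_simps)
        ultimately have "a - b * (p + q) \<ge> (a - 2 * b * p) / 2" by linarith
        then have "\<kappa> \<le> min (a - b * (p + q)) (\<gamma> - c)" unfolding \<kappa>_def by (rule min.mono) simp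
        then have "\<kappa> * (q - p) \<le> (q - p) * min (a - b * (p + q)) (\<gamma> - c)"
          using q by (simp add: mult.commute mult_left_mono)
        also have "\<dots> \<le> r q - r p" unfolding r_def using p q b_pos by (intro slope) auto
        finally show ?thesis .
      qed
      ultimately have False using no_zero_deriv[OF d] by blast
      then show ?thesis ..
    qed
  qed
  have P6: "r ps - r ph \<le> 2 * ((2 * b + a * b * L_F) / 2)
               * (a_max\<^sup>2 * \<beta>\<^sup>2 / (4 * b_min ^ 4) + \<alpha>\<^sup>2 / (4 * b_min\<^sup>2))"
    if h: "\<alpha> \<ge> 0" "\<beta> \<ge> 0" "b_hat \<ge> b_min" "\<bar>a_hat - a\<bar> \<le> \<alpha>" "\<bar>b_hat - b\<bar> \<le> \<beta>"
      "ph \<in> {0..a / b}" "ph = a_hat / (2 * b_hat)" for \<alpha> \<beta> a_hat b_hat ph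
  proof -
    define X where "X = a_max\<^sup>2 * \<beta>\<^sup>2 / (4 * b_min ^ 4) + \<alpha>\<^sup>2 / (4 * b_min\<^sup>2)"
    define t where "t = \<gamma> - (a - b * ph)"
    have ph0: "0 \<le> ph" "ph \<le> a / b" using h by auto
    have D2: "(ph - ps)^2 \<le> 2 * X"
      using est_bound[of b_min b b_hat a a_max a_hat \<alpha> \<beta>] h bmin_pos b_ge a_pos a_le
      by (simp add: X_def ps_def)
    have eqr: "r ps - r ph = b * (ph - ps)^2 + ph * phi t"
      using rps quad[of ph] by (simp add: r_def rev_eq t_def algebra_simps)
    have pphi: "ph * phi t \<le> a * b * L_F / 2 * (ph - ps)^2"
    proof (cases "t \<ge> c")
      case True
      then show ?thesis using phi_zero[OF True] a_pos b_pos LF_pos by simp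
    next
      case False
      have pb: "phi t \<le> L_F * (c - t)^2 / 2" using False LF_pos by (intro phi_bound) auto
      have ct: "0 \<le> c - t" "c - t \<le> b * (ps - ph)"
        using False g3 b_pos by (auto simp: t_def ps_def field_simps)
      have "(c - t)^2 \<le> (b * (ps - ph))^2" using ct by (intro power_mono) auto
      also have "\<dots> = b^2 * (ph - ps)^2" by (simp add: power2_eq_square algebra_simps)
      finally have c2: "(c - t)^2 \<le> b^2 * (ph - ps)^2" .
      have "ph * phi t \<le> (a / b) * (L_F * (c - t)^2 / 2)"
        using ph0 pb phi_nonneg[of t] by (intro mult_mono) auto
      also have "\<dots> \<le> (a / b) * (L_F * (b^2 * (ph - ps)^2) / 2)"
        using c2 LF_pos a_pos b_pos by (intro mult_left_mono divide_right_mono) auto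
      also have "\<dots> = a * b * L_F / 2 * (ph - ps)^2"
        using b_pos by (simp add: power2_eq_square field_simps)
      finally show ?thesis .
    qed
    have "r ps - r ph \<le> (b + a * b * L_F / 2) * (ph - ps)^2"
      using eqr pphi by (simp add: algebra_simps)
    also have "\<dots> \<le> (b + a * b * L_F / 2) * (2 * X)"
      using D2 a_pos b_pos LF_pos by (intro mult_left_mono) auto
    also have "\<dots> = 2 * ((2 * b + a * b * L_F) / 2) * X" by (simp add: algebra_simps)
    finally show ?thesis by (simp add: X_def)
  qed
  show ?thesis
    unfolding r_def[symmetric] ps_def[symmetric]
    using ps_in P2 P3 P4 P5 P6 by blast
qed

end
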